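(* Let $S$ be a graded reduced affine monoid and $\tilde S$ as in the context. Suppose $\alpha,\beta\in\mathbb{N}_0^{\mathcal{A}(\tilde S)}$ satisfy $\kappa(\alpha)=\kappa(\beta)$ and $\delta(\alpha)=\delta(\beta)$. Then $x^{\alpha}\sim x^{\beta}$, where $\sim$ is the semigroup congruence on the free commutative monoid $\tilde M=\{x^{\alpha}\mid\alpha\in\mathbb{N}_0^{\mathcal{A}(\tilde S)}\}$ generated by $\{(x_{a[k]}x_{b[l]},\,x_{a[k+1]}x_{b[l-1]})\mid a,b\in\mathcal{A}(S),\ 0\le k\le|a|-1,\ 1\le l\le|b|\}$.
   Context: A monoid is a commutative cancellative semigroup with identity; affine means a finitely generated submonoid of a finitely generated free abelian group; reduced means the identity is the only unit. $S$ (written multiplicatively) is graded: $S=\bigsqcup_{d\in\mathbb{N}_0}S_d$ with $S_dS_e\subseteq S_{d+e}$, and $|s|=d$ for $s\in S_d$ (not necessarily connected). $\mathcal{A}(S)$ is the set of atoms of $S$. Define $\tilde S=\{s[i]\mid s\in S,\ 0\le i\le|s|\}$ with multiplication $s[i]\cdot t[j]=(st)[i+j]$ (a submonoid of $S\times\mathbb{N}_0$); its atoms are $\mathcal{A}(\tilde S)=\{a[i]\mid a\in\mathcal{A}(S),\ 0\le i\le|a|\}$. $\tilde M$ is the free commutative monoid on indeterminates $x_{a[i]}$, $a[i]\in\mathcal{A}(\tilde S)$, with $x^{\alpha}=\prod x_{a[i]}^{\alpha(a[i])}$. Define $\kappa:\mathbb{N}_0^{\mathcal{A}(\tilde S)}\to\mathbb{N}_0^{\mathcal{A}(S)}$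 by $\kappa(\lambda)(a)=\sum_{i=0}^{|a|}\lambda(a[i])$, and $\delta:\mathbb{N}_0^{\mathcal{A}(\tilde S)}\to\mathbb{N}_0$ by $\delta(\lambda)=\sum_{a[i]\in\mathcal{A}(\tilde S)}i\,\lambda(a[i])$. *)

theory Defs
  imports "HOL-Library.Multiset" "HOL-Library.Function_Algebras" "HOL-Library.Product_Plus"
begin

text \<open>Monoids are written additively here (the paper writes them multiplicatively).
  The ambient finitely generated free abelian group is \<open>'d \<Rightarrow> int\<close> with \<open>'d\<close> finite.\<close>

definition is_submonoid :: "'a::comm_monoid_add set \<Rightarrow> bool" where
  "is_submonoid M \<longleftrightarrow> 0 \<in> M \<and> (\<forall>s\<in>M. \<forall>t\<in>M. s + t \<in> M)"

definition is_unit_in :: "'a::comm_monoid_add set \<Rightarrow> 'a \<Rightarrow> bool" where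
  "is_unit_in M u \<longleftrightarrow> u \<in> M \<and> (\<exists>v\<in>M. u + v = 0)"

definition atoms :: "'a::comm_monoid_add set \<Rightarrow> 'a set" where
  "atoms M = {a \<in> M. \<not> is_unit_in M a \<and>
       (\<forall>s\<in>M. \<forall>t\<in>M. a = s + t \<longrightarrow> is_unit_in M s \<or> is_unit_in M t)}"

definition affine_monoid :: "('d::finite \<Rightarrow> int) set \<Rightarrow> bool" where
  "affine_monoid S \<longleftrightarrow> is_submonoid S \<and>
     (\<exists>G. finite G \<and> G \<subseteq> S \<and> S = {sum_mset X | X. set_mset X \<subseteq> G})"

definition reduced :: "'a::comm_monoid_add set \<Rightarrow> bool" where
  "reduced M \<longleftrightarrow> (\<forall>u. is_unit_in M u \<longrightarrow> u = 0)"

text \<open>Grading \<open>S = \<Union>d S_d\<close>, \<open>S_d S_e \<subseteq> S_{d+e}\<close>, given by the degree map \<open>|_|\<close>.\<close>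
definition graded :: "'a::comm_monoid_add set \<Rightarrow> ('a \<Rightarrow> nat) \<Rightarrow> bool" where
  "graded S deg \<longleftrightarrow> (\<forall>s\<in>S. \<forall>t\<in>S. deg (s + t) = deg s + deg t)"

text \<open>\<open>\<tilde>S = {s[i] | s \<in> S, 0 \<le> i \<le> |s|}\<close> as a submonoid of \<open>S \<times> \<nat>\<^sub>0\<close>; \<open>s[i]\<close> is the pair \<open>(s,i)\<close>.\<close>
definition tildeS :: "'a::comm_monoid_add set \<Rightarrow> ('a \<Rightarrow> nat) \<Rightarrow> ('a \<times> nat) set" where
  "tildeS S deg = {(s, i) | s i. s \<in> S \<and> i \<le> deg s}"

text \<open>Exponent vectors in \<open>\<nat>\<^sub>0^{\<A>(\<tilde>S)}\<close> are multisets over \<open>\<A>(\<tilde>S)\<close>;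
  the multiset \<open>\<alpha>\<close> is the monomial \<open>x^\<alpha>\<close> of the free commutative monoid \<open>\<tilde>M\<close>.\<close>
definition kappa :: "('a \<Rightarrow> nat) \<Rightarrow> ('a \<times> nat) multiset \<Rightarrow> 'a \<Rightarrow> nat" where
  "kappa deg lam a = (\<Sum>i\<le>deg a. count lam (a, i))"

definition delta :: "('a \<times> nat) multiset \<Rightarrow> nat" where
  "delta lam = (\<Sum>p\<in>set_mset lam. snd p * count lam p)"

definition gens :: "'a::comm_monoid_add set \<Rightarrow> ('a \<Rightarrow> nat)
     \<Rightarrow> (('a \<times> nat) multiset \<times> ('a \<times> nat) multiset) set" where
  "gens S deg = {({#(a, k), (b, l)#}, {#(a, k + 1), (b, l - 1)#}) | a b k l.
      a \<in> atoms S \<and> b \<in> atoms S \<and> k + 1 \<le> deg a \<and> 1 \<le> l \<and> l \<le> deg b}"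

inductive mcong :: "'b set \<Rightarrow> ('b multiset \<times> 'b multiset) set
     \<Rightarrow> 'b multiset \<Rightarrow> 'b multiset \<Rightarrow> bool" for A R where
  base: "(u, v) \<in> R \<Longrightarrow> mcong A R u v"
| refl: "set_mset u \<subseteq> A \<Longrightarrow> mcong A R u u"
| sym: "mcong A R u v \<Longrightarrow> mcong A R v u"
| trans: "mcong A R u v \<Longrightarrow> mcong A R v w \<Longrightarrow> mcong A R u w"
| add: "mcong A R u v \<Longrightarrow> set_mset w \<subseteq> A \<Longrightarrow> mcong A R (u + w) (v + w)"

end

theory Submission
  imports Defs
begin


lemma delta_eq: "delta lam = sum_mset (image_mset snd lam)"
proof (induction lam)
  case empty then show ?case by (simp add: delta_def)
next
  case (add x M)
  show ?case
  proof (cases "x \<in># M")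
    case True
    have "delta (add_mset x M) = (\<Sum>p\<in>set_mset M. snd p * count M p + (if p = x then snd p else 0))"
      unfolding delta_def using True by (intro sum.cong) (auto simp: insert_absorb)
    also have "\<dots> = delta M + snd x" using True by (simp add: sum.distrib delta_def)
    finally show ?thesis using add by simp
  next
    case False
    have "delta (add_mset x M) = snd x * count (add_mset x M) x + (\<Sum>p\<in>set_mset M. snd p * count (add_mset x M) p)"
      unfolding delta_def using False by simp
    also have "(\<Sum>p\<in>set_mset M. snd p * count (add_mset x M) p) = delta M"
      unfolding delta_def using False by (intro sum.cong) auto
    finally show ?thesis using add False by (simp add: count_eq_zero_iff)
  qed
qed

lemma kappa_eq: "set_mset lam \<subseteq> {(a,i). i \<le> deg a} \<Longrightarrow> kappa deg lam a = count (image_mset fst lam) a"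
proof (induction lam)
  case empty then show ?case by (simp add: kappa_def)
next
  case (add x M)
  obtain b l where x: "x = (b,l)" by force
  have "kappa deg (add_mset x M) a = kappa deg M a + (\<Sum>i\<le>deg a. if (b,l) = (a,i) then 1 else 0)"
    unfolding kappa_def x sum.distrib[symmetric] by (intro sum.cong) auto
  also have "(\<Sum>i\<le>deg a. if (b,l) = (a,i) then 1 else 0) = (if b = a then 1 else (0::nat))"
    using add.prems x by (auto simp: sum.delta)
  finally show ?case using add x by auto
qed

definition Avalid :: "('a::comm_monoid_add) set \<Rightarrow> ('a \<Rightarrow> nat) \<Rightarrow> ('a \<times> nat) set" where
  "Avalid S deg = {(a,i). a \<in> atoms S \<and> i \<le> deg a}"

lemma atoms_tilde:
  assumes "0 \<in> S" "reduced S" "graded S deg"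
  shows "atoms (tildeS S deg) = Avalid S deg"
proof -
  have d0: "deg 0 = 0" using assms(1,3) unfolding graded_def by (metis add.right_neutral add_cancel_right_right)
  have uS: "is_unit_in S u \<longleftrightarrow> u = 0" for u
    using assms(1,2) unfolding reduced_def is_unit_in_def by auto
  have uT: "is_unit_in (tildeS S deg) p \<longleftrightarrow> p = (0,0)" for p
  proof
    assume "is_unit_in (tildeS S deg) p"
    then obtain s i t j where p: "p = (s,i)" "s \<in> S" "t \<in> S" "s + t = 0" "i + j = 0" "i \<le> deg s"
      unfolding is_unit_in_def tildeS_def zero_prod_def by auto
    then have "is_unit_in S s" unfolding is_unit_in_def by auto
    then show "p = (0,0)" using p uS by auto
  next
    assume "p = (0,0)" then show "is_unit_in (tildeS S deg) p"
      unfolding is_unit_in_def tildeS_def using assms(1) d0 by (auto intro!: exI[of _ 0] simp: zero_prod_def)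
  qed
  show ?thesis
  proof (intro set_eqI iffI)
    fix p assume p: "p \<in> atoms (tildeS S deg)"
    then obtain s i where si: "p = (s,i)" "s \<in> S" "i \<le> deg s" unfolding atoms_def tildeS_def by auto
    have ne: "p \<noteq> (0,0)" using p uT unfolding atoms_def by auto
    have s0: "s \<noteq> 0" using si ne d0 by auto
    have "s \<in> atoms S" unfolding atoms_def
    proof (intro CollectI conjI ballI impI)
      show "s \<in> S" by fact
      show "\<not> is_unit_in S s" using s0 uS by auto
      fix t u assume tu: "t \<in> S" "u \<in> S" "s = t + u"
      have dd: "deg s = deg t + deg u" using tu assms(3) unfolding graded_def by auto
      define i1 where "i1 = min i (deg t)"
      define i2 where "i2 = i - i1"
      have "(t,i1) \<in> tildeS S deg" "(u,i2) \<in> tildeS S deg"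
        unfolding tildeS_def i1_def i2_def using tu dd si by auto
      moreover have "p = (t,i1) + (u,i2)" using si tu i1_def i2_def by auto
      ultimately have "is_unit_in (tildeS S deg) (t,i1) \<or> is_unit_in (tildeS S deg) (u,i2)"
        using p unfolding atoms_def by blast
      then show "is_unit_in S t \<or> is_unit_in S u" using uT uS by auto
    qed
    then show "p \<in> Avalid S deg" using si unfolding Avalid_def by auto
  next
    fix p assume "p \<in> Avalid S deg"
    then obtain a i where ai: "p = (a,i)" "a \<in> atoms S" "i \<le> deg a" unfolding Avalid_def by auto
    have aS: "a \<in> S" "a \<noteq> 0" using ai uS unfolding atoms_def by auto
    show "p \<in> atoms (tildeS S deg)" unfolding atoms_def
    proof (intro CollectI conjI ballI impI)
      show "p \<in> tildeS S deg" using ai aS unfolding tildeS_def by auto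
      show "\<not> is_unit_in (tildeS S deg) p" using uT ai aS by auto
      fix x y assume xy: "x \<in> tildeS S deg" "y \<in> tildeS S deg" "p = x + y"
      obtain t j u k where tj: "x = (t,j)" "t \<in> S" "j \<le> deg t" "y = (u,k)" "u \<in> S" "k \<le> deg u"
        using xy(1,2) unfolding tildeS_def by auto
      have "a = t + u" using xy ai tj by auto
      then have "t = 0 \<or> u = 0" using ai(2) tj uS unfolding atoms_def by auto
      then show "is_unit_in (tildeS S deg) x \<or> is_unit_in (tildeS S deg) y"
        using tj d0 uT by auto
    qed
  qed
qed


lemma move_step:
  assumes "(a,i) \<in> Avalid S deg" "i + 1 \<le> deg a" "(b,l) \<in># M" "1 \<le> l"
    and "set_mset M \<subseteq> Avalid S deg"
  shows "mcong (Avalid S deg) (gens S deg) (add_mset (a,i) M)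
           (add_mset (a,i+1) (add_mset (b,l-1) (M - {#(b,l)#})))"
proof -
  have bA: "(b,l) \<in> Avalid S deg" using assms by auto
  have g: "({#(a, i), (b, l)#}, {#(a, i + 1), (b, l - 1)#}) \<in> gens S deg"
    unfolding gens_def mem_Collect_eq
    apply (rule exI[of _ a], rule exI[of _ b], rule exI[of _ i], rule exI[of _ l], intro conjI refl)
    using assms(1,2,4) bA unfolding Avalid_def by auto
  have w: "set_mset (M - {#(b,l)#}) \<subseteq> Avalid S deg" using assms(5)
    by (auto dest: in_diffD)
  have "mcong (Avalid S deg) (gens S deg) ({#(a, i), (b, l)#} + (M - {#(b,l)#}))
          ({#(a, i + 1), (b, l - 1)#} + (M - {#(b,l)#}))"
    by (rule mcong.add[OF mcong.base[OF g] w])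
  moreover have "{#(a, i), (b, l)#} + (M - {#(b,l)#}) = add_mset (a,i) M"
    using assms(3) by simp
  moreover have "{#(a, i + 1), (b, l - 1)#} + (M - {#(b,l)#}) =
      add_mset (a,i+1) (add_mset (b,l-1) (M - {#(b,l)#}))" by simp
  ultimately show ?thesis by simp
qed

lemma inner:
  assumes IH: "\<And>\<alpha> \<beta>. size \<alpha> = n \<Longrightarrow> set_mset \<alpha> \<subseteq> Avalid S deg \<Longrightarrow> set_mset \<beta> \<subseteq> Avalid S deg
     \<Longrightarrow> image_mset fst \<alpha> = image_mset fst \<beta>
     \<Longrightarrow> sum_mset (image_mset snd \<alpha>) = sum_mset (image_mset snd \<beta>)
     \<Longrightarrow> mcong (Avalid S deg) (gens S deg) \<alpha> \<beta>"
  shows "j - i = k \<Longrightarrow> i \<le> j \<Longrightarrow> size \<alpha> = n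
     \<Longrightarrow> set_mset (add_mset (a,i) \<alpha>) \<subseteq> Avalid S deg
     \<Longrightarrow> set_mset (add_mset (a,j) \<beta>) \<subseteq> Avalid S deg
     \<Longrightarrow> image_mset fst \<alpha> = image_mset fst \<beta>
     \<Longrightarrow> sum_mset (image_mset snd \<alpha>) + i = sum_mset (image_mset snd \<beta>) + j
     \<Longrightarrow> mcong (Avalid S deg) (gens S deg) (add_mset (a,i) \<alpha>) (add_mset (a,j) \<beta>)"
proof (induction k arbitrary: i \<alpha>)
  case 0
  then have ij: "i = j" by simp
  have "mcong (Avalid S deg) (gens S deg) \<alpha> \<beta>" using 0 ij by (intro IH) auto
  from mcong.add[OF this, of "{#(a,i)#}"] show ?case using 0 ij by simp
next
  case (Suc k)
  have ij: "i < j" using Suc.prems by simp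
  have "sum_mset (image_mset snd \<alpha>) > 0" using Suc.prems(7) ij by simp
  moreover have "(\<forall>p\<in>#\<alpha>. snd p = 0) \<Longrightarrow> sum_mset (image_mset snd \<alpha>) = 0"
    by (induction \<alpha>) auto
  ultimately have "\<exists>p\<in>#\<alpha>. snd p \<noteq> 0" by (metis less_irrefl)
  then obtain p where p: "p \<in># \<alpha>" "snd p > 0"
    by auto
  obtain b l where bl: "p = (b,l)" by force
  define \<alpha>' where "\<alpha>' = add_mset (b,l-1) (\<alpha> - {#(b,l)#})"
  have aA: "(a,i) \<in> Avalid S deg" "set_mset \<alpha> \<subseteq> Avalid S deg" using Suc.prems(4) by auto
  have jd: "j \<le> deg a" using Suc.prems(5) unfolding Avalid_def by auto
  have st: "mcong (Avalid S deg) (gens S deg) (add_mset (a,i) \<alpha>) (add_mset (a,i+1) \<alpha>')"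
    unfolding \<alpha>'_def using p bl aA ij jd by (intro move_step) auto
  have blA: "(b,l) \<in> Avalid S deg" using p bl aA by auto
  have A': "set_mset (add_mset (a,i+1) \<alpha>') \<subseteq> Avalid S deg"
    unfolding \<alpha>'_def using aA blA ij jd unfolding Avalid_def by (auto dest: in_diffD)
  have pa: "\<alpha> = add_mset (b,l) (\<alpha> - {#(b,l)#})" using p bl by simp
  have f: "image_mset fst \<alpha>' = image_mset fst \<alpha>"
    unfolding \<alpha>'_def by (subst (2) pa) simp
  have s: "sum_mset (image_mset snd \<alpha>') + 1 = sum_mset (image_mset snd \<alpha>)"
  proof -
    have "sum_mset (image_mset snd \<alpha>) = sum_mset (image_mset snd (add_mset (b,l) (\<alpha> - {#(b,l)#})))"
      using pa by (rule arg_cong)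
    also have "\<dots> = l + sum_mset (image_mset snd (\<alpha> - {#(b,l)#}))" by simp
    finally show ?thesis unfolding \<alpha>'_def using p bl by simp
  qed
  have sz: "size \<alpha>' = n" unfolding \<alpha>'_def using Suc.prems(3) p bl
    by (subst (asm) pa) simp
  have "mcong (Avalid S deg) (gens S deg) (add_mset (a,i+1) \<alpha>') (add_mset (a,j) \<beta>)"
    using Suc.prems ij f s sz A' by (intro Suc.IH) auto
  with st show ?case by (rule mcong.trans)
qed

lemma main:
  "size \<alpha> = n \<Longrightarrow> set_mset \<alpha> \<subseteq> Avalid S deg \<Longrightarrow> set_mset \<beta> \<subseteq> Avalid S deg
     \<Longrightarrow> image_mset fst \<alpha> = image_mset fst \<beta>
     \<Longrightarrow> sum_mset (image_mset snd \<alpha>) = sum_mset (image_mset snd \<beta>)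
     \<Longrightarrow> mcong (Avalid S deg) (gens S deg) \<alpha> \<beta>"
proof (induction n arbitrary: \<alpha> \<beta>)
  case 0
  then have "\<alpha> = {#}" "\<beta> = {#}" by auto
  then show ?case by (auto intro: mcong.refl)
next
  case (Suc n)
  obtain x \<alpha>0 where x: "\<alpha> = add_mset x \<alpha>0" using Suc.prems(1)
    by (metis size_eq_Suc_imp_eq_union)
  obtain a i where ai: "x = (a,i)" by force
  have "a \<in># image_mset fst \<beta>" using Suc.prems(4) x ai by (metis image_eqI fst_conv set_image_mset union_single_eq_member)
  then obtain y where y: "y \<in># \<beta>" "fst y = a" by auto
  obtain j where yj: "y = (a,j)" using y by (cases y) auto
  define \<beta>0 where "\<beta>0 = \<beta> - {#y#}"
  have b: "\<beta> = add_mset (a,j) \<beta>0" unfolding \<beta>0_def using y yj by simp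
  have f: "image_mset fst \<alpha>0 = image_mset fst \<beta>0" using Suc.prems(4) x ai b by simp
  have s: "sum_mset (image_mset snd \<alpha>0) + i = sum_mset (image_mset snd \<beta>0) + j"
    using Suc.prems(5) x ai b by simp
  have sa: "size \<alpha>0 = n" using Suc.prems(1) x by simp
  have sb: "size \<beta>0 = n" using sa f by (metis size_image_mset)
  show ?case
  proof (cases "i \<le> j")
    case True
    show ?thesis unfolding x ai b
      using Suc.prems(2,3) x ai b f s sa True
      by (intro inner[OF Suc.IH, where k="j - i"]) auto
  next
    case False
    have "mcong (Avalid S deg) (gens S deg) (add_mset (a,j) \<beta>0) (add_mset (a,i) \<alpha>0)"
      using Suc.prems(2,3) x ai b f s sb False
      by (intro inner[OF Suc.IH, where k="i - j"]) auto
    then show ?thesis unfolding x ai b by (rule mcong.sym)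
  qed
qed


theorem lemma4p2:
  fixes S :: "('d::finite \<Rightarrow> int) set"
    and deg :: "('d \<Rightarrow> int) \<Rightarrow> nat"
    and \<alpha> \<beta> :: "(('d \<Rightarrow> int) \<times> nat) multiset"
  assumes "affine_monoid S" and "reduced S" and "graded S deg"
    and "set_mset \<alpha> \<subseteq> atoms (tildeS S deg)"
    and "set_mset \<beta> \<subseteq> atoms (tildeS S deg)"
    and "\<forall>a\<in>atoms S. kappa deg \<alpha> a = kappa deg \<beta> a"
    and "delta \<alpha> = delta \<beta>"
  shows "mcong (atoms (tildeS S deg)) (gens S deg) \<alpha> \<beta>"
proof -
  have z: "0 \<in> S" using assms(1) unfolding affine_monoid_def is_submonoid_def by auto
  have A: "atoms (tildeS S deg) = Avalid S deg" by (rule atoms_tilde[OF z assms(2,3)])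
  have va: "set_mset \<alpha> \<subseteq> Avalid S deg" and vb: "set_mset \<beta> \<subseteq> Avalid S deg"
    using assms(4,5) A by auto
  have va': "set_mset \<alpha> \<subseteq> {(a,i). i \<le> deg a}" and vb': "set_mset \<beta> \<subseteq> {(a,i). i \<le> deg a}"
    using va vb unfolding Avalid_def by auto
  have f: "image_mset fst \<alpha> = image_mset fst \<beta>"
  proof (rule multiset_eqI)
    fix a
    show "count (image_mset fst \<alpha>) a = count (image_mset fst \<beta>) a"
    proof (cases "a \<in> atoms S")
      case True
      then show ?thesis using assms(6) kappa_eq[OF va'] kappa_eq[OF vb'] by metis
    next
      case False
      then have "a \<notin># image_mset fst \<alpha>" "a \<notin># image_mset fst \<beta>"
        using va vb unfolding Avalid_def by auto
      then show ?thesis by (metis count_eq_zero_iff)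
    qed
  qed
  have s: "sum_mset (image_mset snd \<alpha>) = sum_mset (image_mset snd \<beta>)"
    using assms(7) delta_eq by metis
  show ?thesis unfolding A by (rule main[OF HOL.refl va vb f s])
qed

end
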